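(* The generating function $$G_{(123,132)}(x,p,q,y,z)=\sum_{n\ge 0}\ \sum_{\pi\in S_n(123,132)} x^n p^{\operatorname{asc}(\pi)} q^{\operatorname{des}(\pi)} y^{\operatorname{MNA}(\pi)} z^{\operatorname{MND}(\pi)}$$ is equal to $$\frac{A}{1 - 2 q^2 x^2 z - p q x^2 y z - 2 p q^2 x^3 y z + q^4 x^4 z^2 - p q^3 x^4 y z^2},$$ where $$A=1 + x + p x^2 y + q x^2 z - 2 q^2 x^2 z - q^2 x^3 z - p q x^2 y z + 2 p q x^3 y z - 2 p q^2 x^3 y z - q^3 x^4 z^2 + q^4 x^4 z^2 + p q^2 x^4 y z^2 - p q^3 x^4 y z^2.$$
   Context: For $n\ge 0$, $S_n$ denotes the set of permutations $\pi=\pi_1\pi_2\cdots\pi_n$ of $[n]=\{1,\dots,n\}$ in one-line notation ($S_0$ consists of the empty permutation, for which all statistics below are $0$). A permutation $\pi\in S_n$ avoids a pattern $\tau\in S_k$ if there are no indices $i_1<\dots<i_k$ such that $\pi_{i_a}<\pi_{i_b}$ if and only if $\tau_a<\tau_b$; $S_n(\tau,\rho)$ is the set of permutations in $S_n$ avoiding both $\tau$ and $\rho$. $\operatorname{asc}(\pi)$ (resp. $\operatorname{des}(\pi)$) is the number of $i\in[n-1]$ with $\pi_i<\pi_{i+1}$ (resp. $\pi_i>\pi_{i+1}$). $\operatorname{MNA}(\pi)$ is the maximum size of a set $I\subseteq[n-1]$ such that $\pi_i<\pi_{i+1}$ for all $i\in I$ and $|i-j|\ge 2$ for distinct $i,j\in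 I$ (maximum number of non-overlapping ascents); $\operatorname{MND}(\pi)$ is defined analogously with $\pi_i>\pi_{i+1}$ (maximum number of non-overlapping descents). *)

theory Defs
  imports "HOL-Combinatorics.Multiset_Permutations" "HOL-Computational_Algebra.Formal_Power_Series"
begin

(* Permutations of [n] in one-line notation are lists; positions are 0-indexed. *)

definition contains_pattern :: "nat list \<Rightarrow> nat list \<Rightarrow> bool" where
  "contains_pattern \<pi> \<tau> \<longleftrightarrow>
     (\<exists>is. length is = length \<tau> \<and> sorted_wrt (<) is \<and> (\<forall>i\<in>set is. i < length \<pi>) \<and>
        (\<forall>a<length \<tau>. \<forall>b<length \<tau>. (\<pi> ! (is ! a) < \<pi> ! (is ! b)) \<longleftrightarrow> (\<tau> ! a < \<tau> ! b)))"

definition avoids :: "nat list \<Rightarrow> nat list \<Rightarrow> bool" where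
  "avoids \<pi> \<tau> \<longleftrightarrow> \<not> contains_pattern \<pi> \<tau>"

definition Av2 :: "nat \<Rightarrow> nat list \<Rightarrow> nat list \<Rightarrow> nat list set" where
  "Av2 n \<tau> \<rho> = {\<pi> \<in> permutations_of_set {1..n}. avoids \<pi> \<tau> \<and> avoids \<pi> \<rho>}"

definition asc_set :: "nat list \<Rightarrow> nat set" where
  "asc_set \<pi> = {i. Suc i < length \<pi> \<and> \<pi> ! i < \<pi> ! Suc i}"

definition des_set :: "nat list \<Rightarrow> nat set" where
  "des_set \<pi> = {i. Suc i < length \<pi> \<and> \<pi> ! i > \<pi> ! Suc i}"

definition asc :: "nat list \<Rightarrow> nat" where "asc \<pi> = card (asc_set \<pi>)"
definition des :: "nat list \<Rightarrow> nat" where "des \<pi> = card (des_set \<pi>)"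

definition non_overlapping :: "nat set \<Rightarrow> bool" where
  "non_overlapping I \<longleftrightarrow> (\<forall>i\<in>I. \<forall>j\<in>I. i \<noteq> j \<longrightarrow> i + 2 \<le> j \<or> j + 2 \<le> i)"

definition MNA :: "nat list \<Rightarrow> nat" where
  "MNA \<pi> = Max {card I | I. I \<subseteq> asc_set \<pi> \<and> non_overlapping I}"

definition MND :: "nat list \<Rightarrow> nat" where
  "MND \<pi> = Max {card I | I. I \<subseteq> des_set \<pi> \<and> non_overlapping I}"

definition G_123_132 :: "'a::comm_ring_1 \<Rightarrow> 'a \<Rightarrow> 'a \<Rightarrow> 'a \<Rightarrow> 'a fps" where
  "G_123_132 p q y z = Abs_fps (\<lambda>n. \<Sum>\<pi>\<in>Av2 n [1,2,3] [1,3,2].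
      p ^ asc \<pi> * q ^ des \<pi> * y ^ MNA \<pi> * z ^ MND \<pi>)"

end

theory Submission
  imports Defs
begin

definition good :: "nat list \<Rightarrow> bool" where
  "good l \<longleftrightarrow> \<not>(\<exists>i j k. i < j \<and> j < k \<and> k < length l \<and> l!i < l!j \<and> l!i < l!k)"

lemma all3: "(\<forall>a<Suc (Suc (Suc 0)). \<forall>b<Suc (Suc (Suc 0)). P a b) \<longleftrightarrow> (\<forall>a\<in>{0, Suc 0, Suc (Suc 0)}. \<forall>b\<in>{0, Suc 0, Suc (Suc 0)}. P a b)"
  by (auto simp: less_Suc_eq)

lemma len3: "length xs = 3 \<Longrightarrow> \<exists>i j k. xs = [i,j,k]"
  by (cases xs; cases "tl xs"; cases "tl (tl xs)"; auto)

lemma avoids_iff_good: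
  assumes "distinct l"
  shows "(avoids l [1,2,3] \<and> avoids l [1,3,2]) \<longleftrightarrow> good l"
proof
  assume A: "avoids l [1,2,3] \<and> avoids l [1,3,2]"
  show "good l"
  proof (rule ccontr)
    assume "\<not> good l"
    then obtain i j k where h: "i < j" "j < k" "k < length l" "l!i < l!j" "l!i < l!k"
      unfolding good_def by blast
    have ne: "l!j \<noteq> l!k" using assms h by (simp add: nth_eq_iff_index_eq)
    show False
    proof (cases "l!j < l!k")
      case True
      have "contains_pattern l [1,2,3]" unfolding contains_pattern_def
        apply (rule exI[of _ "[i,j,k]"])
        using h True by (simp add: all3)
      then show False using A unfolding avoids_def by blast
    next
      case False
      then have "l!k < l!j" using ne by simp
      have "contains_pattern l [1,3,2]" unfolding contains_pattern_def
        apply (rule exI[of _ "[i,j,k]"])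
        using h \<open>l!k < l!j\<close> by (simp add: all3)
      then show False using A unfolding avoids_def by blast
    qed
  qed
next
  assume G: "good l"
  have *: False if "contains_pattern l \<tau>" "\<tau> = [1,2,3] \<or> \<tau> = [1,3,2]" for \<tau>
  proof -
    have "\<exists>ix. length ix = length \<tau> \<and> sorted_wrt (<) ix \<and> (\<forall>i\<in>set ix. i < length l) \<and>
      (\<forall>a<length \<tau>. \<forall>b<length \<tau>. (l ! (ix ! a) < l ! (ix ! b)) \<longleftrightarrow> (\<tau> ! a < \<tau> ! b))"
      using that(1) unfolding contains_pattern_def .
    then obtain ix where h0: "length ix = length \<tau> \<and> sorted_wrt (<) ix \<and> (\<forall>i\<in>set ix. i < length l) \<and>
      (\<forall>a<length \<tau>. \<forall>b<length \<tau>. (l ! (ix ! a) < l ! (ix ! b)) \<longleftrightarrow> (\<tau> ! a < \<tau> ! b))"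
      ..
    have h: "length ix = length \<tau>" "sorted_wrt (<) ix" "\<forall>i\<in>set ix. i < length l"
      "\<forall>a<length \<tau>. \<forall>b<length \<tau>. (l ! (ix ! a) < l ! (ix ! b)) \<longleftrightarrow> (\<tau> ! a < \<tau> ! b)"
      using h0 by (rule conjunct1, rule conjunct2[THEN conjunct1], rule conjunct2[THEN conjunct2, THEN conjunct1],
        rule conjunct2[THEN conjunct2, THEN conjunct2])
    have "length ix = 3" using h(1) that(2) by auto
    then obtain i j k where ijk: "ix = [i,j,k]" using len3 by blast
    have l3: "length \<tau> = 3" using that(2) by auto
    have e1: "(l!(ix!0) < l!(ix!1)) \<longleftrightarrow> (\<tau>!0 < \<tau>!1)" using h(4) l3 by simp
    have e2: "(l!(ix!0) < l!(ix!2)) \<longleftrightarrow> (\<tau>!0 < \<tau>!2)" using h(4) l3 by simp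
    have "l!i < l!j" "l!i < l!k" using e1 e2 that(2) ijk by auto
    moreover have "i < j" "j < k" "k < length l" using h(2,3) ijk by auto
    ultimately show False using G unfolding good_def by blast
  qed
  show "avoids l [1,2,3] \<and> avoids l [1,3,2]" unfolding avoids_def using * by blast
qed

fun cnt :: "(nat \<Rightarrow> nat \<Rightarrow> bool) \<Rightarrow> nat list \<Rightarrow> nat" where
  "cnt R (a#b#l) = (if R a b then Suc (cnt R (b#l)) else cnt R (b#l))"
| "cnt R _ = 0"

fun mno :: "(nat \<Rightarrow> nat \<Rightarrow> bool) \<Rightarrow> nat list \<Rightarrow> nat" where
  "mno R (a#b#l) = (if R a b then Suc (mno R l) else mno R (b#l))"
| "mno R _ = 0"

definition rset :: "(nat \<Rightarrow> nat \<Rightarrow> bool) \<Rightarrow> nat list \<Rightarrow> nat set" where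
  "rset R l = {i. Suc i < length l \<and> R (l!i) (l!Suc i)}"

lemma rset_fin: "finite (rset R l)"
  by (rule finite_subset[of _ "{..<length l}"]) (auto simp: rset_def)

lemma rset_short: "length l < 2 \<Longrightarrow> rset R l = {}"
  by (auto simp: rset_def)

lemma rset_cons2: "rset R (a#b#l) = {i. i = 0 \<and> R a b} \<union> Suc ` rset R (b#l)"
proof (rule set_eqI)
  fix x show "x \<in> rset R (a#b#l) \<longleftrightarrow> x \<in> {i. i = 0 \<and> R a b} \<union> Suc ` rset R (b#l)"
    by (cases x) (auto simp: rset_def)
qed

lemma card_rset: "card (rset R l) = cnt R l"
proof (induction R l rule: cnt.induct)
  case (1 R a b l)
  have "0 \<notin> Suc ` rset R (b#l)" by auto
  then show ?case using 1 rset_fin[of R "b#l"]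
    by (auto simp: rset_cons2 card_image)
qed (auto simp: rset_def)

lemma mno_exists: "\<exists>I. I \<subseteq> rset R l \<and> non_overlapping I \<and> card I = mno R l"
proof (induction R l rule: mno.induct)
  case (1 R a b l)
  show ?case
  proof (cases "R a b")
    case True
    then obtain I where I: "I \<subseteq> rset R l" "non_overlapping I" "card I = mno R l" using 1 by auto
    have fI: "finite I" using I(1) rset_fin finite_subset by blast
    let ?J = "insert 0 ((+) 2 ` I)"
    have "?J \<subseteq> rset R (a#b#l)" using I(1) True by (auto simp: rset_def)
    moreover have "non_overlapping ?J" using I(2) unfolding non_overlapping_def by auto
    moreover have "card ?J = mno R (a#b#l)" using True I(3) fI by (subst card_insert_disjoint) (auto simp: card_image inj_on_def)
    ultimately show ?thesis by blast
  next
    case False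
    then obtain I where I: "I \<subseteq> rset R (b#l)" "non_overlapping I" "card I = mno R (b#l)" using 1 by auto
    let ?J = "Suc ` I"
    have "?J \<subseteq> rset R (a#b#l)" using I(1) by (auto simp: rset_cons2)
    moreover have "non_overlapping ?J" using I(2) unfolding non_overlapping_def by auto
    moreover have "card ?J = mno R (a#b#l)" using False I(3) by (simp add: card_image)
    ultimately show ?thesis by blast
  qed
qed (auto simp: rset_def non_overlapping_def)

lemma mno_upper: "I \<subseteq> rset R l \<Longrightarrow> non_overlapping I \<Longrightarrow> card I \<le> mno R l"
proof (induction R l arbitrary: I rule: mno.induct)
  case (1 R a b l)
  have fI: "finite I" using 1(3) rset_fin finite_subset by blast
  show ?case
  proof (cases "R a b")
    case True
    let ?I' = "{i. i + 2 \<in> I}"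
    have I'1: "?I' \<subseteq> rset R l" using 1(3) by (auto simp: rset_def)
    have I'2: "non_overlapping ?I'" unfolding non_overlapping_def
    proof (intro ballI impI)
      fix i j assume "i \<in> ?I'" "j \<in> ?I'" "i \<noteq> j"
      then show "i + 2 \<le> j \<or> j + 2 \<le> i"
        using 1(4)[unfolded non_overlapping_def, rule_format, of "i+2" "j+2"] by simp
    qed
    have c1: "card ?I' \<le> mno R l" using 1(1)[OF True I'1 I'2] .
    have sub: "I \<subseteq> (I \<inter> {0,1}) \<union> (+) 2 ` ?I'"
    proof
      fix i assume "i \<in> I"
      show "i \<in> (I \<inter> {0,1}) \<union> (+) 2 ` ?I'"
      proof (cases "i < 2")
        case True then show ?thesis using \<open>i \<in> I\<close> by auto
      next
        case False
        then obtain m where "i = m + 2" by (metis add.commute le_add_diff_inverse not_less)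
        then show ?thesis using \<open>i \<in> I\<close> by (auto simp: image_iff)
      qed
    qed
    have c01: "card (I \<inter> {0,1}) \<le> 1"
    proof (cases "0 \<in> I \<and> 1 \<in> I")
      case True then show ?thesis
        using 1(4)[unfolded non_overlapping_def, rule_format, of 0 1] by simp
    next
      case False
      then have "I \<inter> {0,1} \<subseteq> {0} \<or> I \<inter> {0,1} \<subseteq> {1}" by auto
      then show ?thesis
      proof
        assume "I \<inter> {0,1} \<subseteq> {0}" then show ?thesis using card_mono[of "{0::nat}"] by fastforce
      next
        assume "I \<inter> {0,1} \<subseteq> {1}" then show ?thesis using card_mono[of "{1::nat}"] by fastforce
      qed
    qed
    have fI': "finite ?I'" using I'1 rset_fin finite_subset by blast
    have "card I \<le> card ((I \<inter> {0,1}) \<union> (+) 2 ` ?I')"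
      using sub fI' by (intro card_mono) auto
    also have "\<dots> \<le> card (I \<inter> {0,1}) + card ((+) 2 ` ?I')" by (rule card_Un_le)
    also have "\<dots> \<le> 1 + card ?I'" using c01 card_image_le[OF fI', of "(+) 2"] by linarith
    finally show ?thesis using c1 True by simp
  next
    case False
    let ?I' = "{i. Suc i \<in> I}"
    have "0 \<notin> I" using 1(3) False by (auto simp: rset_def)
    have eq: "I = Suc ` ?I'"
    proof (rule set_eqI)
      fix x show "x \<in> I \<longleftrightarrow> x \<in> Suc ` ?I'"
        using \<open>0 \<notin> I\<close> by (cases x) auto
    qed
    have I'1: "?I' \<subseteq> rset R (b#l)" using 1(3) by (auto simp: rset_def)
    have I'2: "non_overlapping ?I'" unfolding non_overlapping_def
    proof (intro ballI impI)
      fix i j assume "i \<in> ?I'" "j \<in> ?I'" "i \<noteq> j"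
      then show "i + 2 \<le> j \<or> j + 2 \<le> i"
        using 1(4)[unfolded non_overlapping_def, rule_format, of "Suc i" "Suc j"] by simp
    qed
    have "card I = card ?I'" by (subst eq) (simp add: card_image)
    then show ?thesis using 1(2)[OF False I'1 I'2] False by simp
  qed
qed (simp_all add: rset_def)

lemma Max_mno: "Max {card I | I. I \<subseteq> rset R l \<and> non_overlapping I} = mno R l"
proof (rule Max_eqI)
  show "finite {card I | I. I \<subseteq> rset R l \<and> non_overlapping I}"
    by (rule finite_subset[of _ "{..card (rset R l)}"])
       (auto intro: card_mono rset_fin)
  show "y \<le> mno R l" if "y \<in> {card I | I. I \<subseteq> rset R l \<and> non_overlapping I}" for y
    using that mno_upper by blast
  show "mno R l \<in> {card I | I. I \<subseteq> rset R l \<and> non_overlapping I}"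
    using mno_exists[of R l] by (metis (mono_tags, lifting) mem_Collect_eq)
qed

lemma good_Cons: "good (a#l) \<longleftrightarrow> good l \<and> \<not>(\<exists>j k. j < k \<and> k < length l \<and> a < l!j \<and> a < l!k)"
proof
  assume g: "good (a#l)"
  have "good l" unfolding good_def
  proof
    assume "\<exists>i j k. i < j \<and> j < k \<and> k < length l \<and> l!i < l!j \<and> l!i < l!k"
    then obtain i j k where "i < j \<and> j < k \<and> k < length l \<and> l!i < l!j \<and> l!i < l!k" by blast
    then have "Suc i < Suc j \<and> Suc j < Suc k \<and> Suc k < length (a#l) \<and> (a#l)!Suc i < (a#l)!Suc j \<and> (a#l)!Suc i < (a#l)!Suc k" by simp
    then show False using g unfolding good_def by blast
  qed
  moreover have "\<not>(\<exists>j k. j < k \<and> k < length l \<and> a < l!j \<and> a < l!k)"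
  proof
    assume "\<exists>j k. j < k \<and> k < length l \<and> a < l!j \<and> a < l!k"
    then obtain j k where "j < k \<and> k < length l \<and> a < l!j \<and> a < l!k" by blast
    then have "0 < Suc j \<and> Suc j < Suc k \<and> Suc k < length (a#l) \<and> (a#l)!0 < (a#l)!Suc j \<and> (a#l)!0 < (a#l)!Suc k" by simp
    then show False using g unfolding good_def by blast
  qed
  ultimately show "good l \<and> \<not>(\<exists>j k. j < k \<and> k < length l \<and> a < l!j \<and> a < l!k)" by blast
next
  assume h: "good l \<and> \<not>(\<exists>j k. j < k \<and> k < length l \<and> a < l!j \<and> a < l!k)"
  show "good (a#l)" unfolding good_def
  proof
    assume "\<exists>i j k. i < j \<and> j < k \<and> k < length (a#l) \<and> (a#l)!i < (a#l)!j \<and> (a#l)!i < (a#l)!k"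
    then obtain i j k where ijk: "i < j" "j < k" "k < length (a#l)" "(a#l)!i < (a#l)!j" "(a#l)!i < (a#l)!k" by blast
    obtain j' where j': "j = Suc j'" using ijk(1) by (cases j) auto
    obtain k' where k': "k = Suc k'" using ijk(1,2) by (cases k) auto
    show False
    proof (cases i)
      case 0
      then have "j' < k' \<and> k' < length l \<and> a < l!j' \<and> a < l!k'" using ijk j' k' by simp
      then show False using h by blast
    next
      case (Suc i')
      then have "i' < j' \<and> j' < k' \<and> k' < length l \<and> l!i' < l!j' \<and> l!i' < l!k'" using ijk j' k' by simp
      then show False using h unfolding good_def by blast
    qed
  qed
qed

lemma good_map:
  assumes mono: "\<forall>x\<in>set l. \<forall>y\<in>set l. (f x < f y) = (x < y)" and g: "good l"
  shows "good (map f l)"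
  unfolding good_def
proof
  assume "\<exists>i j k. i < j \<and> j < k \<and> k < length (map f l) \<and> map f l!i < map f l!j \<and> map f l!i < map f l!k"
  then obtain i j k where ijk: "i < j" "j < k" "k < length l" "f (l!i) < f (l!j)" "f (l!i) < f (l!k)" by auto
  have "l!i \<in> set l" "l!j \<in> set l" "l!k \<in> set l" using ijk by auto
  then have "l!i < l!j" "l!i < l!k" using mono ijk by auto
  then show False using g ijk unfolding good_def by blast
qed

definition C :: "nat \<Rightarrow> nat list set" where
  "C n = {\<pi> \<in> permutations_of_set {1..n}. good \<pi>}"

lemma C_iff: "\<pi> \<in> C n \<longleftrightarrow> set \<pi> = {1..n} \<and> distinct \<pi> \<and> good \<pi>"
  by (auto simp: C_def permutations_of_set_def)

lemma finite_C: "finite (C n)"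
  by (rule finite_subset[of _ "permutations_of_set {1..n}"]) (auto simp: C_def)

definition sw :: "nat \<Rightarrow> nat \<Rightarrow> nat" where "sw n v = (if v = n then Suc n else v)"
definition unsw :: "nat \<Rightarrow> nat \<Rightarrow> nat" where "unsw n v = (if v = Suc n then n else v)"

lemma sw_mono: "x \<in> {1..n} \<Longrightarrow> y \<in> {1..n} \<Longrightarrow> (sw n x < sw n y) = (x < y)"
  by (auto simp: sw_def)

lemma sw_inj: "inj_on (sw n) {1..n}"
  by (auto simp: sw_def inj_on_def)

lemma sw_image: "1 \<le> n \<Longrightarrow> insert n (sw n ` {1..n}) = {1..Suc n}"
proof (rule set_eqI)
  fix x assume n: "1 \<le> n"
  show "x \<in> insert n (sw n ` {1..n}) \<longleftrightarrow> x \<in> {1..Suc n}"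
  proof
    assume "x \<in> insert n (sw n ` {1..n})" then show "x \<in> {1..Suc n}" using n by (auto simp: sw_def)
  next
    assume x: "x \<in> {1..Suc n}"
    show "x \<in> insert n (sw n ` {1..n})"
    proof (cases "x = n \<or> x = Suc n")
      case True
      then show ?thesis using n by (auto simp: sw_def image_iff intro: bexI[of _ n])
    next
      case False
      then have "sw n x = x" "x \<in> {1..n}" using x by (auto simp: sw_def)
      then show ?thesis by (metis imageI insertI2)
    qed
  qed
qed

lemma C_Suc:
  assumes n: "1 \<le> n"
  shows "C (Suc n) = (\<lambda>\<sigma>. Suc n # \<sigma>) ` C n \<union> (\<lambda>\<sigma>. n # map (sw n) \<sigma>) ` C n"
proof (intro equalityI subsetI)
  fix \<pi> assume "\<pi> \<in> (\<lambda>\<sigma>. Suc n # \<sigma>) ` C n \<union> (\<lambda>\<sigma>. n # map (sw n) \<sigma>) ` C n"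
  then show "\<pi> \<in> C (Suc n)"
  proof
    assume "\<pi> \<in> (\<lambda>\<sigma>. Suc n # \<sigma>) ` C n"
    then obtain \<sigma> where s: "\<sigma> \<in> C n" and pi: "\<pi> = Suc n # \<sigma>" by blast
    have ss: "set \<sigma> = {1..n}" "distinct \<sigma>" "good \<sigma>" using s by (auto simp: C_iff)
    have "set \<pi> = {1..Suc n}" using ss pi by auto
    moreover have "distinct \<pi>" using ss pi by auto
    moreover have "good \<pi>" unfolding pi good_Cons
    proof (intro conjI notI)
      show "good \<sigma>" by (rule ss(3))
      assume "\<exists>j k. j < k \<and> k < length \<sigma> \<and> Suc n < \<sigma>!j \<and> Suc n < \<sigma>!k"
      then obtain j k where "j < k" "k < length \<sigma>" "Suc n < \<sigma>!j" by blast
      moreover have "\<sigma>!j \<in> set \<sigma>" using \<open>j<k\<close> \<open>k < length \<sigma>\<close> by auto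
      ultimately show False using ss(1) by auto
    qed
    ultimately show ?thesis unfolding C_iff by blast
  next
    assume "\<pi> \<in> (\<lambda>\<sigma>. n # map (sw n) \<sigma>) ` C n"
    then obtain \<sigma> where s: "\<sigma> \<in> C n" and pi: "\<pi> = n # map (sw n) \<sigma>" by blast
    have ss: "set \<sigma> = {1..n}" "distinct \<sigma>" "good \<sigma>" using s by (auto simp: C_iff)
    have "set \<pi> = {1..Suc n}" using ss pi sw_image[OF n] by simp
    moreover have dm: "distinct (map (sw n) \<sigma>)" using ss sw_inj by (simp add: distinct_map)
    moreover have "n \<notin> sw n ` {1..n}" by (auto simp: sw_def)
    ultimately have "distinct \<pi>" using pi ss by simp
    note st = \<open>set \<pi> = {1..Suc n}\<close>
    have "good \<pi>" unfolding pi good_Cons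
    proof (intro conjI notI)
      show "good (map (sw n) \<sigma>)" using ss by (intro good_map) (auto simp: sw_mono)
      assume "\<exists>j k. j < k \<and> k < length (map (sw n) \<sigma>) \<and> n < map (sw n) \<sigma>!j \<and> n < map (sw n) \<sigma>!k"
      then obtain j k where jk: "j < k" "k < length \<sigma>" "n < sw n (\<sigma>!j)" "n < sw n (\<sigma>!k)" by auto
      have "\<sigma>!j \<in> set \<sigma>" "\<sigma>!k \<in> set \<sigma>" using jk by auto
      then have "\<sigma>!j = n" "\<sigma>!k = n" using jk ss(1) by (auto simp: sw_def split: if_splits)
      moreover have "j < length \<sigma>" using jk by simp
      ultimately have "j = k" using jk(2) ss(2) nth_eq_iff_index_eq by metis
      then show False using jk by simp
    qed
    then show ?thesis using st \<open>distinct \<pi>\<close> unfolding C_iff by blast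
  qed
next
  fix \<pi> assume "\<pi> \<in> C (Suc n)"
  then have pp: "set \<pi> = {1..Suc n}" "distinct \<pi>" "good \<pi>" unfolding C_iff by blast+
  then obtain a \<rho> where pi: "\<pi> = a # \<rho>" by (cases \<pi>) auto
  have a: "a \<in> {1..Suc n}" "a \<notin> set \<rho>" "distinct \<rho>" using pp pi by auto
  have sr: "set \<rho> = {1..Suc n} - {a}" using pp(1) a(2) pi by auto
  have gr: "good \<rho>" and ng: "\<not>(\<exists>j k. j < k \<and> k < length \<rho> \<and> a < \<rho>!j \<and> a < \<rho>!k)"
    using pp(3) pi good_Cons by auto
  have ale: "a \<le> Suc n" using a(1) by simp
  consider "a = Suc n" | "a = n" | "a < n" by (metis ale le_SucE le_neq_implies_less)
  then show "\<pi> \<in> (\<lambda>\<sigma>. Suc n # \<sigma>) ` C n \<union> (\<lambda>\<sigma>. n # map (sw n) \<sigma>) ` C n"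
  proof cases
    case 1
    have e: "{1..Suc n} - {Suc n} = {1..(n::nat)}" by auto
    have "set \<rho> = {1..n}" using sr 1 e by simp
    then have "\<rho> \<in> C n" using a gr unfolding C_iff by blast
    then show ?thesis using pi 1 by blast
  next
    case 2
    let ?\<sigma> = "map (unsw n) \<rho>"
    have bk: "map (sw n) ?\<sigma> = \<rho>"
      unfolding map_map by (rule map_idI) (use a(2) 2 in \<open>auto simp: sw_def unsw_def\<close>)
    have mono: "\<forall>x\<in>set \<rho>. \<forall>y\<in>set \<rho>. (unsw n x < unsw n y) = (x < y)"
      using sr 2 by (auto simp: unsw_def)
    have "set ?\<sigma> = {1..n}"
    proof -
      have "unsw n ` ({1..Suc n} - {n}) = {1..n}"
      proof (rule set_eqI)
        fix x show "x \<in> unsw n ` ({1..Suc n} - {n}) \<longleftrightarrow> x \<in> {1..n}"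
        proof
          assume "x \<in> unsw n ` ({1..Suc n} - {n})" then show "x \<in> {1..n}"
            using n by (auto simp: unsw_def)
        next
          assume x: "x \<in> {1..n}"
          show "x \<in> unsw n ` ({1..Suc n} - {n})"
          proof (cases "x = n")
            case True then show ?thesis using n by (auto simp: unsw_def image_iff intro: bexI[of _ "Suc n"])
          next
            case False then have "unsw n x = x" "x \<in> {1..Suc n} - {n}" using x by (auto simp: unsw_def)
            then show ?thesis by (metis imageI)
          qed
        qed
      qed
      then show ?thesis using sr 2 by simp
    qed
    moreover have "distinct ?\<sigma>"
    proof -
      have "inj_on (unsw n) (set \<rho>)" using sr 2 by (auto simp: unsw_def inj_on_def)
      then show ?thesis using a(3) by (simp add: distinct_map)
    qed
    moreover have "good ?\<sigma>" using good_map[OF mono gr] .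
    ultimately have "?\<sigma> \<in> C n" by (simp add: C_iff)
    then show ?thesis using pi 2 bk by (metis (no_types, lifting) UnI2 image_eqI)
  next
    case 3
    have "n \<in> set \<rho>" "Suc n \<in> set \<rho>" using sr 3 n by auto
    then obtain j k where jk: "j < length \<rho>" "\<rho>!j = n" "k < length \<rho>" "\<rho>!k = Suc n"
      by (metis in_set_conv_nth)
    have "j \<noteq> k" using jk by auto
    then have "j < k \<or> k < j" by auto
    then show ?thesis
    proof
      assume "j < k"
      then have "j < k \<and> k < length \<rho> \<and> a < \<rho>!j \<and> a < \<rho>!k" using jk 3 by simp
      with ng show ?thesis by blast
    next
      assume "k < j"
      then have "k < j \<and> j < length \<rho> \<and> a < \<rho>!k \<and> a < \<rho>!j" using jk 3 by simp
      with ng show ?thesis by blast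
    qed
  qed
qed

lemma sum_C_Suc:
  assumes n: "1 \<le> n"
  shows "(\<Sum>\<pi>\<in>C (Suc n). g \<pi>) = (\<Sum>\<sigma>\<in>C n. g (Suc n # \<sigma>)) + (\<Sum>\<sigma>\<in>C n. g (n # map (sw n) \<sigma>))"
proof -
  have inj1: "inj_on (\<lambda>\<sigma>. Suc n # \<sigma>) (C n)" by (auto simp: inj_on_def)
  have inj2: "inj_on (\<lambda>\<sigma>. n # map (sw n) \<sigma>) (C n)"
  proof (rule inj_onI)
    fix s t assume st: "s \<in> C n" "t \<in> C n" "n # map (sw n) s = n # map (sw n) t"
    have "inj_on (sw n) (set s \<union> set t)" using st(1,2) by (intro inj_on_subset[OF sw_inj]) (auto simp: C_iff)
    then show "s = t" using st(3) by (simp add: inj_on_map_eq_map)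
  qed
  have disj: "(\<lambda>\<sigma>. Suc n # \<sigma>) ` C n \<inter> (\<lambda>\<sigma>. n # map (sw n) \<sigma>) ` C n = {}" by auto
  show ?thesis
    unfolding C_Suc[OF n]
    by (subst sum.union_disjoint) (auto simp: finite_C disj sum.reindex[OF inj1] sum.reindex[OF inj2])
qed

lemma C0: "C 0 = {[]}"
  by (auto simp: C_iff good_def)

lemma C1: "C 1 = {[1]}"
proof (rule set_eqI)
  fix \<pi> show "\<pi> \<in> C 1 \<longleftrightarrow> \<pi> \<in> {[1]}"
  proof
    assume "\<pi> \<in> C 1"
    then have h: "set \<pi> = {1}" "distinct \<pi>" by (auto simp: C_iff)
    then have "length \<pi> = 1" using distinct_card by fastforce
    then obtain v where "\<pi> = [v]" by (cases \<pi>) auto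
    then show "\<pi> \<in> {[1]}" using h by auto
  next
    assume "\<pi> \<in> {[1]}" then show "\<pi> \<in> C 1" by (auto simp: C_iff good_def)
  qed
qed

definition Fw :: "'a::comm_ring_1 \<Rightarrow> 'a \<Rightarrow> 'a \<Rightarrow> 'a \<Rightarrow> nat list \<Rightarrow> 'a" where
  "Fw p q y z l = p ^ cnt (<) l * q ^ cnt (\<lambda>a b. b < a) l * y ^ cnt (<) l * z ^ mno (\<lambda>a b. b < a) l"

fun Hw :: "'a::comm_ring_1 \<Rightarrow> 'a \<Rightarrow> 'a \<Rightarrow> 'a \<Rightarrow> nat list \<Rightarrow> 'a" where
  "Hw p q y z (b#c#l) = (if b < c then p*y else if c < b then q else 1) * Fw p q y z (c#l)"
| "Hw p q y z _ = 1"

lemma Fw_asc: "a < b \<Longrightarrow> Fw p q y z (a#b#l) = p*y*Fw p q y z (b#l)"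
  by (simp add: Fw_def mult_ac)

lemma Fw_desc: "b < a \<Longrightarrow> Fw p q y z (a#b#l) = q*z*Hw p q y z (b#l)"
proof (cases l)
  case Nil
  assume "b < a" then show ?thesis using Nil by (simp add: Fw_def)
next
  case (Cons c l')
  assume "b < a"
  then show ?thesis using Cons
    by (cases "b < c"; cases "c < b") (auto simp: Fw_def mult_ac)
qed

lemma Fw_Nil: "Fw p q y z [] = 1" and Fw_single: "Fw p q y z [v] = 1"
  by (simp_all add: Fw_def)

lemma cnt_map: "(\<forall>x\<in>set l. \<forall>y\<in>set l. R' (f x) (f y) = R x y) \<Longrightarrow> cnt R' (map f l) = cnt R l"
  by (induction R l rule: cnt.induct) auto

lemma mno_map: "(\<forall>x\<in>set l. \<forall>y\<in>set l. R' (f x) (f y) = R x y) \<Longrightarrow> mno R' (map f l) = mno R l"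
  by (induction R l rule: mno.induct) auto

lemma Fw_map:
  assumes "\<forall>x\<in>set l. \<forall>y\<in>set l. (f x < f y) = (x < y)"
  shows "Fw p q y z (map f l) = Fw p q y z l"
proof -
  have a: "cnt (<) (map f l) = cnt (<) l" using assms by (intro cnt_map) auto
  have b: "cnt (\<lambda>a b. b < a) (map f l) = cnt (\<lambda>a b. b < a) l" using assms by (intro cnt_map) auto
  have c: "mno (\<lambda>a b. b < a) (map f l) = mno (\<lambda>a b. b < a) l" using assms by (intro mno_map) auto
  show ?thesis by (simp add: Fw_def a b c)
qed

lemma Hw_map:
  assumes "\<forall>x\<in>set l. \<forall>y\<in>set l. (f x < f y) = (x < y)"
  shows "Hw p q y z (map f l) = Hw p q y z l"
proof -
  have "l = [] \<or> (\<exists>b. l = [b]) \<or> (\<exists>b c l'. l = b#c#l')" by (metis list.exhaust)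
  then show ?thesis
  proof (elim disjE exE)
    fix b c l' assume l: "l = b#c#l'"
    have "Fw p q y z (map f (c#l')) = Fw p q y z (c#l')" using assms l by (intro Fw_map) auto
    moreover have "(f b < f c) = (b < c)" "(f c < f b) = (c < b)" using assms l by auto
    ultimately show ?thesis using l by simp
  qed auto
qed

lemma C_cons:
  assumes "\<sigma> \<in> C n" "1 \<le> n"
  obtains b l where "\<sigma> = b # l" "b \<in> {1..n}" "set \<sigma> = {1..n}"
proof -
  have s: "set \<sigma> = {1..n}" using assms(1) by (simp add: C_iff)
  then have "\<sigma> \<noteq> []" using assms(2) by auto
  then obtain b l where "\<sigma> = b # l" by (cases \<sigma>) auto
  moreover have "b \<in> {1..n}" using s calculation by auto
  ultimately show ?thesis using that s by blast
qed

lemma sw_mono_set: "\<sigma> \<in> C n \<Longrightarrow> \<forall>x\<in>set \<sigma>. \<forall>y\<in>set \<sigma>. (sw n x < sw n y) = (x < y)"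
  by (auto simp: C_iff sw_mono)

lemma Fw_T: "\<sigma> \<in> C n \<Longrightarrow> 1 \<le> n \<Longrightarrow> Fw p q y z (Suc n # \<sigma>) = q*z*Hw p q y z \<sigma>"
  by (erule C_cons) (auto simp: Fw_desc)

lemma Hw_T: "\<sigma> \<in> C n \<Longrightarrow> 1 \<le> n \<Longrightarrow> Hw p q y z (Suc n # \<sigma>) = q*Fw p q y z \<sigma>"
  by (erule C_cons) auto

lemma Fw_S: "\<sigma> \<in> C n \<Longrightarrow> 1 \<le> n \<Longrightarrow>
  Fw p q y z (n # map (sw n) \<sigma>) = (if hd \<sigma> = n then p*y*Fw p q y z \<sigma> else q*z*Hw p q y z \<sigma>)"
proof -
  assume s: "\<sigma> \<in> C n" "1 \<le> n"
  have fm: "Fw p q y z (map (sw n) \<sigma>) = Fw p q y z \<sigma>" using sw_mono_set[OF s(1)] by (rule Fw_map)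
  have hm: "Hw p q y z (map (sw n) \<sigma>) = Hw p q y z \<sigma>" using sw_mono_set[OF s(1)] by (rule Hw_map)
  obtain b l where bl: "\<sigma> = b # l" "b \<in> {1..n}" using C_cons[OF s] by blast
  show ?thesis
  proof (cases "b = n")
    case True
    then have "Fw p q y z (n # map (sw n) \<sigma>) = p*y*Fw p q y z (map (sw n) \<sigma>)"
      using bl by (simp add: sw_def Fw_asc)
    then show ?thesis using fm True bl by simp
  next
    case False
    then have "sw n b < n" using bl by (auto simp: sw_def)
    then have "Fw p q y z (n # map (sw n) \<sigma>) = q*z*Hw p q y z (map (sw n) \<sigma>)"
      using bl by (simp add: Fw_desc)
    then show ?thesis using hm False bl by simp
  qed
qed

lemma Hw_S: "\<sigma> \<in> C n \<Longrightarrow> 1 \<le> n \<Longrightarrow>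
  Hw p q y z (n # map (sw n) \<sigma>) = (if hd \<sigma> = n then p*y else q) * Fw p q y z \<sigma>"
proof -
  assume s: "\<sigma> \<in> C n" "1 \<le> n"
  have fm: "Fw p q y z (map (sw n) \<sigma>) = Fw p q y z \<sigma>" using sw_mono_set[OF s(1)] by (rule Fw_map)
  obtain b l where bl: "\<sigma> = b # l" "b \<in> {1..n}" using C_cons[OF s] by blast
  have "Hw p q y z (n # map (sw n) \<sigma>) = (if n < sw n b then p*y else if sw n b < n then q else 1) * Fw p q y z (map (sw n) \<sigma>)"
    using bl by simp
  moreover have "(if n < sw n b then p*y else if sw n b < n then q else 1) = (if b = n then p*y else q)"
    using bl by (auto simp: sw_def)
  ultimately show ?thesis using fm bl by simp
qed

definition FT where "FT p q y z n = (\<Sum>\<pi>\<in>C n. if hd \<pi> = n then Fw p q y z \<pi> else 0)"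
definition FS where "FS p q y z n = (\<Sum>\<pi>\<in>C n. if hd \<pi> = n then 0 else Fw p q y z \<pi>)"
definition HT where "HT p q y z n = (\<Sum>\<pi>\<in>C n. if hd \<pi> = n then Hw p q y z \<pi> else 0)"
definition HS where "HS p q y z n = (\<Sum>\<pi>\<in>C n. if hd \<pi> = n then 0 else Hw p q y z \<pi>)"

lemma sum_split_if: "(\<Sum>x\<in>A. f x) = (\<Sum>x\<in>A. if P x then f x else 0) + (\<Sum>x\<in>A. if P x then 0 else f x)"
  by (simp add: sum.distrib[symmetric] cong: sum.cong) (rule sum.cong, auto)

lemma sumF: "(\<Sum>\<pi>\<in>C n. Fw p q y z \<pi>) = FT p q y z n + FS p q y z n"
  unfolding FT_def FS_def by (rule sum_split_if)

lemma sumH: "(\<Sum>\<pi>\<in>C n. Hw p q y z \<pi>) = HT p q y z n + HS p q y z n"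
  unfolding HT_def HS_def by (rule sum_split_if)

lemma FT_Suc: "1 \<le> n \<Longrightarrow> FT p q y z (Suc n) = q*z*(HT p q y z n + HS p q y z n)"
proof -
  assume n: "1 \<le> n"
  have "FT p q y z (Suc n) = (\<Sum>\<sigma>\<in>C n. q*z*Hw p q y z \<sigma>)"
    unfolding FT_def sum_C_Suc[OF n] using n by (simp add: Fw_T cong: sum.cong)
  also have "\<dots> = q*z*(HT p q y z n + HS p q y z n)" by (simp add: sum_distrib_left[symmetric] sumH)
  finally show ?thesis .
qed

lemma HT_Suc: "1 \<le> n \<Longrightarrow> HT p q y z (Suc n) = q*(FT p q y z n + FS p q y z n)"
proof -
  assume n: "1 \<le> n"
  have "HT p q y z (Suc n) = (\<Sum>\<sigma>\<in>C n. q*Fw p q y z \<sigma>)"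
    unfolding HT_def sum_C_Suc[OF n] using n by (simp add: Hw_T cong: sum.cong)
  also have "\<dots> = q*(FT p q y z n + FS p q y z n)" by (simp add: sum_distrib_left[symmetric] sumF)
  finally show ?thesis .
qed

lemma FS_Suc: "1 \<le> n \<Longrightarrow> FS p q y z (Suc n) = p*y*FT p q y z n + q*z*HS p q y z n"
proof -
  assume n: "1 \<le> n"
  have "FS p q y z (Suc n) = (\<Sum>\<sigma>\<in>C n. if hd \<sigma> = n then p*y*Fw p q y z \<sigma> else q*z*Hw p q y z \<sigma>)"
    unfolding FS_def sum_C_Suc[OF n] using n by (simp add: Fw_S cong: sum.cong)
  also have "\<dots> = (\<Sum>\<sigma>\<in>C n. if hd \<sigma> = n then p*y*Fw p q y z \<sigma> else 0) + (\<Sum>\<sigma>\<in>C n. if hd \<sigma> = n then 0 else q*z*Hw p q y z \<sigma>)"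
    by (subst sum_split_if[where P = "\<lambda>\<sigma>. hd \<sigma> = n"]) (intro arg_cong2[where f="(+)"] sum.cong refl; simp)
  also have "\<dots> = p*y*FT p q y z n + q*z*HS p q y z n"
    unfolding FT_def HS_def sum_distrib_left by (intro arg_cong2[where f="(+)"] sum.cong refl) simp_all
  finally show ?thesis .
qed

lemma HS_Suc: "1 \<le> n \<Longrightarrow> HS p q y z (Suc n) = p*y*FT p q y z n + q*FS p q y z n"
proof -
  assume n: "1 \<le> n"
  have "HS p q y z (Suc n) = (\<Sum>\<sigma>\<in>C n. (if hd \<sigma> = n then p*y else q) * Fw p q y z \<sigma>)"
    unfolding HS_def sum_C_Suc[OF n] using n by (simp add: Hw_S cong: sum.cong)
  also have "\<dots> = (\<Sum>\<sigma>\<in>C n. if hd \<sigma> = n then p*y*Fw p q y z \<sigma> else q*Fw p q y z \<sigma>)"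
    by (rule sum.cong) auto
  also have "\<dots> = (\<Sum>\<sigma>\<in>C n. if hd \<sigma> = n then p*y*Fw p q y z \<sigma> else 0) + (\<Sum>\<sigma>\<in>C n. if hd \<sigma> = n then 0 else q*Fw p q y z \<sigma>)"
    by (subst sum_split_if[where P = "\<lambda>\<sigma>. hd \<sigma> = n"]) (intro arg_cong2[where f="(+)"] sum.cong refl; simp)
  also have "\<dots> = p*y*FT p q y z n + q*FS p q y z n"
    unfolding FT_def FS_def sum_distrib_left by (intro arg_cong2[where f="(+)"] sum.cong refl) simp_all
  finally show ?thesis .
qed

lemma C1': "C (Suc 0) = {[Suc 0]}" using C1 by simp

lemma base1: "FT p q y z 1 = 1" "FS p q y z 1 = 0" "HT p q y z 1 = 1" "HS p q y z 1 = 0"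
  by (simp_all add: FT_def FS_def HT_def HS_def C1' Fw_def)

lemma mno_cnt_good: "good l \<Longrightarrow> mno (<) l = cnt (<) l"
proof (induction "(<) :: nat \<Rightarrow> nat \<Rightarrow> bool" l rule: mno.induct)
  case (1 a b l)
  have gbl: "good (b#l)" using 1(3) good_Cons by blast
  have gl: "good l" using gbl good_Cons by blast
  show ?case
  proof (cases "a < b")
    case True
    have "cnt (<) (b#l) = cnt (<) l"
    proof (cases l)
      case (Cons c l')
      have "\<not> b < c"
      proof
        assume "b < c"
        then have "0 < (1::nat) \<and> (1::nat) < 2 \<and> 2 < length (a#b#l) \<and> (a#b#l)!0 < (a#b#l)!1 \<and> (a#b#l)!0 < (a#b#l)!2"
          using True Cons by simp
        then show False using 1(3) unfolding good_def by blast
      qed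
      then show ?thesis using Cons by simp
    qed simp
    then show ?thesis using True 1(1)[OF True gl] by simp
  next
    case False
    then show ?thesis using 1(2)[OF False gbl] by simp
  qed
qed simp_all

lemma asc_eq: "asc \<pi> = cnt (<) \<pi>"
proof -
  have "asc_set \<pi> = rset (<) \<pi>" by (simp add: asc_set_def rset_def)
  then show ?thesis by (simp add: asc_def card_rset)
qed

lemma des_eq: "des \<pi> = cnt (\<lambda>a b. b < a) \<pi>"
proof -
  have "des_set \<pi> = rset (\<lambda>a b. b < a) \<pi>" by (simp add: des_set_def rset_def)
  then show ?thesis by (simp add: des_def card_rset)
qed

lemma MNA_eq: "MNA \<pi> = mno (<) \<pi>"
proof -
  have "asc_set \<pi> = rset (<) \<pi>" by (simp add: asc_set_def rset_def)
  then show ?thesis by (simp add: MNA_def Max_mno)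
qed

lemma MND_eq: "MND \<pi> = mno (\<lambda>a b. b < a) \<pi>"
proof -
  have "des_set \<pi> = rset (\<lambda>a b. b < a) \<pi>" by (simp add: des_set_def rset_def)
  then show ?thesis by (simp add: MND_def Max_mno)
qed

lemma weight_eq: "good \<pi> \<Longrightarrow> p ^ asc \<pi> * q ^ des \<pi> * y ^ MNA \<pi> * z ^ MND \<pi> = Fw p q y z \<pi>"
  by (simp add: asc_eq des_eq MNA_eq MND_eq mno_cnt_good Fw_def)

lemma Av2_eq: "Av2 n [1,2,3] [1,3,2] = C n"
  unfolding Av2_def C_def
  using avoids_iff_good permutations_of_setD(2) by blast

lemma G_eq: "G_123_132 p q y z = Abs_fps (\<lambda>n. \<Sum>\<pi>\<in>C n. Fw p q y z \<pi>)"
  unfolding G_123_132_def Av2_eq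
  by (intro arg_cong[where f=Abs_fps] ext sum.cong refl) (simp add: weight_eq C_iff)

lemma base1s: "FT p q y z (Suc 0) = 1" "FS p q y z (Suc 0) = 0" "HT p q y z (Suc 0) = 1" "HS p q y z (Suc 0) = 0"
  using base1[of p q y z] by simp_all

lemma ALG:
  fixes x P Q Y Z U V H K A :: "'a::idom"
  assumes "U = x*(1 + Q*Z*(H+K))" "H = x*(1+Q*(U+V))" "V = x*(P*Y*U + Q*Z*K)" "K = x*(P*Y*U+Q*V)" "A = 1+U+V"
  shows "A * (1 - 2 * Q^2 * x^2 * Z - P * Q * x^2 * Y * Z - 2 * P * Q^2 * x^3 * Y * Z + Q^4 * x^4 * Z^2
       - P * Q^3 * x^4 * Y * Z^2) = (1 + x + P * x^2 * Y + Q * x^2 * Z - 2 * Q^2 * x^2 * Z - Q^2 * x^3 * Z - P * Q * x^2 * Y * Z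
       + 2 * P * Q * x^3 * Y * Z - 2 * P * Q^2 * x^3 * Y * Z - Q^3 * x^4 * Z^2 + Q^4 * x^4 * Z^2
       + P * Q^2 * x^4 * Y * Z^2 - P * Q^3 * x^4 * Y * Z^2)"
  using assms by algebra

theorem theorem2:
  fixes p q y z :: "'a::field"
  defines "x \<equiv> (fps_X :: 'a fps)"
      and "P \<equiv> fps_const p" and "Q \<equiv> fps_const q" and "Y \<equiv> fps_const y" and "Z \<equiv> fps_const z"
  shows "G_123_132 p q y z =
    (1 + x + P * x^2 * Y + Q * x^2 * Z - 2 * Q^2 * x^2 * Z - Q^2 * x^3 * Z - P * Q * x^2 * Y * Z
       + 2 * P * Q * x^3 * Y * Z - 2 * P * Q^2 * x^3 * Y * Z - Q^3 * x^4 * Z^2 + Q^4 * x^4 * Z^2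
       + P * Q^2 * x^4 * Y * Z^2 - P * Q^3 * x^4 * Y * Z^2)
    / (1 - 2 * Q^2 * x^2 * Z - P * Q * x^2 * Y * Z - 2 * P * Q^2 * x^3 * Y * Z + Q^4 * x^4 * Z^2
       - P * Q^3 * x^4 * Y * Z^2)"
proof -
  define U where "U = Abs_fps (\<lambda>n. if n = 0 then 0 else FT p q y z n)"
  define V where "V = Abs_fps (\<lambda>n. if n = 0 then 0 else FS p q y z n)"
  define H where "H = Abs_fps (\<lambda>n. if n = 0 then 0 else HT p q y z n)"
  define K where "K = Abs_fps (\<lambda>n. if n = 0 then 0 else HS p q y z n)"
  define A where "A = G_123_132 p q y z"
  have eA: "A = 1 + U + V"
  proof (rule fps_ext)
    fix n show "fps_nth A n = fps_nth (1 + U + V) n"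
    proof (cases n)
      case 0 then show ?thesis by (simp add: A_def G_eq U_def V_def C0 Fw_def)
    next
      case (Suc m) then show ?thesis by (simp add: A_def G_eq U_def V_def sumF)
    qed
  qed
  have eU: "U = x*(1 + Q*Z*(H+K))"
  proof (rule fps_ext)
    fix n show "fps_nth U n = fps_nth (x*(1 + Q*Z*(H+K))) n"
    proof (cases n)
      case 0 then show ?thesis by (simp add: U_def x_def)
    next
      case (Suc m) then show ?thesis
        by (cases "m = 0") (auto simp: U_def H_def K_def x_def Q_def Z_def base1s FT_Suc)
    qed
  qed
  have eH: "H = x*(1 + Q*(U+V))"
  proof (rule fps_ext)
    fix n show "fps_nth H n = fps_nth (x*(1 + Q*(U+V))) n"
    proof (cases n)
      case 0 then show ?thesis by (simp add: H_def x_def)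
    next
      case (Suc m) then show ?thesis
        by (cases "m = 0") (auto simp: U_def H_def V_def x_def Q_def base1s HT_Suc)
    qed
  qed
  have eV: "V = x*(P*Y*U + Q*Z*K)"
  proof (rule fps_ext)
    fix n show "fps_nth V n = fps_nth (x*(P*Y*U + Q*Z*K)) n"
    proof (cases n)
      case 0 then show ?thesis by (simp add: V_def x_def)
    next
      case (Suc m) then show ?thesis
        by (cases "m = 0") (auto simp: U_def V_def K_def x_def P_def Y_def Q_def Z_def base1s FS_Suc)
    qed
  qed
  have eK: "K = x*(P*Y*U + Q*V)"
  proof (rule fps_ext)
    fix n show "fps_nth K n = fps_nth (x*(P*Y*U + Q*V)) n"
    proof (cases n)
      case 0 then show ?thesis by (simp add: K_def x_def)
    next
      case (Suc m) then show ?thesis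
        by (cases "m = 0") (auto simp: U_def V_def K_def x_def P_def Y_def Q_def base1s HS_Suc)
    qed
  qed
  define den where "den = (1 - 2 * Q^2 * x^2 * Z - P * Q * x^2 * Y * Z - 2 * P * Q^2 * x^3 * Y * Z + Q^4 * x^4 * Z^2
       - P * Q^3 * x^4 * Y * Z^2)"
  define num where "num = (1 + x + P * x^2 * Y + Q * x^2 * Z - 2 * Q^2 * x^2 * Z - Q^2 * x^3 * Z - P * Q * x^2 * Y * Z
       + 2 * P * Q * x^3 * Y * Z - 2 * P * Q^2 * x^3 * Y * Z - Q^3 * x^4 * Z^2 + Q^4 * x^4 * Z^2
       + P * Q^2 * x^4 * Y * Z^2 - P * Q^3 * x^4 * Y * Z^2)"
  have key: "A * den = num" unfolding den_def num_def by (rule ALG[OF eU eH eV eK eA])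
  have d0: "fps_nth den 0 = 1" by (simp add: den_def x_def)
  have "num / den = num * inverse den" using d0 by (simp add: fps_divide_unit)
  also have "\<dots> = A * (den * inverse den)" using key by (simp add: mult.assoc)
  also have "\<dots> = A" using d0 by (simp add: inverse_mult_eq_1')
  finally have "A = num / den" by simp
  then show ?thesis unfolding A_def num_def den_def .
qed

end
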